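(* Let $(F_n)_{n\ge0}$ be the Fibonacci sequence ($F_0=0$, $F_1=1$, $F_{n+2}=F_{n+1}+F_n$) and $\alpha=(1+\sqrt5)/2$. Let $p\ge 5$ be a prime and $c$ an integer, and suppose $c=F_{k_i}-p^{\ell_i}$ for $i=1,\dots,m$, where $(k_i,\ell_i)$ are all the distinct pairs of integers with $k_i\ge 2$, $\ell_i\ge 0$ satisfying this, indexed so that $\ell_1>\ell_2>\cdots>\ell_m\ge 0$ (then $k_1>k_2>\cdots>k_m\ge 2$). Then for every $i=1,\dots,m-1$, $$k_i\log\alpha-\ell_i\log p\in\big(\log(\alpha/1.25),\,4\log\alpha\big)\subset(0.25,\,2).$$ *)

theory Defs
  imports Complex_Main "HOL-Computational_Algebra.Primes" "HOL-Number_Theory.Fib"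
begin

definition golden :: real where "golden = (1 + sqrt 5) / 2"

end

theory Submission
  imports Defs
begin
lemma g2: "golden^2 = golden + 1"
  unfolding golden_def by (simp add: power2_eq_square field_simps)
lemma gb: "1.618 \<le> golden \<and> golden \<le> 1.6181"
proof -
  have "2.236 \<le> sqrt 5" by (rule real_le_rsqrt) (simp add: power2_eq_square)
  moreover have "sqrt 5 \<le> sqrt (2.2362^2)" by (subst real_sqrt_le_iff) (simp add: power2_eq_square)
  hence "sqrt 5 \<le> 2.2362" by simp
  ultimately show ?thesis unfolding golden_def by simp
qed
lemma exp_up: "exp (1/4::real) < 1.2944"
proof -
  have a: "exp (1/64::real) \<le> 64/63"
  proof -
    have "1 - 1/64 \<le> exp (-(1/64::real))" using exp_ge_add_one_self[of "-(1/64::real)"] by simp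
    moreover have "exp (1/64::real) * exp (-(1/64)) = 1" by (simp add: exp_minus)
    moreover have "exp (-(1/64::real)) = inverse (exp (1/64))" by (rule exp_minus)
    ultimately have i: "63/64 \<le> inverse (exp (1/64::real))" by linarith
    have "exp (1/64) * (63/64) \<le> exp (1/64) * inverse (exp (1/64::real))"
      by (rule mult_left_mono[OF i]) simp
    hence "exp (1/64) * (63/64) \<le> (1::real)" by simp
    thus ?thesis by linarith
  qed
  have "exp (1/4::real) = exp (1/64) ^ 16" by (simp add: exp_of_nat_mult[symmetric])
  also have "\<dots> \<le> (64/63)^16" by (rule power_mono[OF a]) simp
  also have "\<dots> < 1.2944" by (simp add: power_divide)
  finally show ?thesis .
qed
lemma exp_lo: "exp (2::real) > 7"
proof -
  have "(7::real) < (1 + 1/32)^64" by (simp add: power_divide)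
  also have "\<dots> \<le> exp (1/32) ^ 64" by (rule power_mono) (use exp_ge_add_one_self[of "1/32::real"] in auto)
  also have "\<dots> = exp 2" by (simp add: exp_of_nat_mult[symmetric])
  finally show ?thesis .
qed
lemma fib_ub: "real (fib (n+1)) \<le> golden^n \<and> real (fib (n+2)) \<le> golden^(n+1)"
proof (induction n)
  case 0 then show ?case using gb by (simp add: numeral_2_eq_2)
next
  case (Suc n)
  have "real (fib (Suc n + 2)) = fib (n+2) + fib (n+1)" by (simp add: numeral_2_eq_2)
  also have "\<dots> \<le> golden^(n+1) + golden^n" using Suc by simp
  also have "\<dots> = golden^n * (golden + 1)" by (simp add: algebra_simps)
  also have "\<dots> = golden^(Suc n + 1)" by (simp add: g2[symmetric] power2_eq_square)
  finally show ?case using Suc by simp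
qed
lemma fib_lb: "golden^n \<le> golden * real (fib (n+1)) \<and> golden^(n+1) \<le> golden * real (fib (n+2))"
proof (induction n)
  case 0 then show ?case using gb by (simp add: numeral_2_eq_2)
next
  case (Suc n)
  have "golden^(Suc n + 1) = golden^n * (golden + 1)" by (simp add: g2[symmetric] power2_eq_square)
  also have "\<dots> = golden^(n+1) + golden^n" by (simp add: algebra_simps)
  also have "\<dots> \<le> golden * fib (n+2) + golden * fib (n+1)" using Suc by simp
  also have "\<dots> = golden * real (fib (Suc n + 2))" by (simp add: numeral_2_eq_2 algebra_simps)
  finally show ?case using Suc by simp
qed

lemma gpos: "golden > 1" using gb by simp

lemma incl: "{ln (golden / 1.25)<..<4 * ln golden} \<subseteq> {0.25<..<2}"
proof -
  have "exp (1/4) < golden / 1.25" using exp_up gb by simp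
  hence "ln (exp (1/4)) < ln (golden/1.25)" using gpos by (subst ln_less_cancel_iff) auto
  hence a: "1/4 < ln (golden/1.25)" by simp
  have "golden^4 \<le> 1.6181^4" using gb by (intro power_mono) auto
  moreover have "(1.6181::real)^4 < 7" by (simp add: power_divide)
  ultimately have "golden^4 < exp 2" using exp_lo by linarith
  hence "ln (golden^4) < ln (exp 2)" using gpos by (subst ln_less_cancel_iff) auto
  hence "ln (golden^4) < 2" by simp
  hence "4 * ln golden < 2" using gpos by (simp add: ln_realpow)
  thus ?thesis using a by auto
qed

lemma pair:
  fixes p :: nat and c :: int and K K' L L' :: nat
  assumes p5: "p \<ge> 5" and K: "K \<ge> 2" "K' \<ge> 2"
    and e1: "c = int (fib K) - int p ^ L" and e2: "c = int (fib K') - int p ^ L'"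
    and LL: "L' < L"
  shows "ln (golden / 1.25) < real K * ln golden - real L * ln (real p)
         \<and> real K * ln golden - real L * ln (real p) < 4 * ln golden"
proof -
  have d: "real (fib K) - real (fib K') = real p ^ L - real p ^ L'"
  proof -
    have "int (fib K) + int p ^ L' = int (fib K') + int p ^ L" using e1 e2 by linarith
    hence "real_of_int (int (fib K) + int p ^ L') = real_of_int (int (fib K') + int p ^ L)" by simp
    hence "real (fib K) + real p ^ L' = real (fib K') + real p ^ L" by simp
    thus ?thesis by linarith
  qed
  have pp: "real p ^ L' * real p \<le> real p ^ L"
  proof -
    have "real p ^ Suc L' \<le> real p ^ L" using LL p5 by (intro power_increasing) auto
    thus ?thesis by (simp add: mult.commute)
  qed
  have ppos: "real p ^ L' > 0" using p5 by simp
  have "real p ^ L' < real p ^ L" using LL p5 by (intro power_strict_increasing) auto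
  with d have "fib K' < fib K" by simp
  hence KK: "K' < K" using fib_mono[of K K'] by (meson not_less)
  define j where "j = K - 3"
  have j: "K = j + 3" using KK K unfolding j_def by linarith
  have fK: "fib K = fib (j+2) + fib (j+1)" by (simp add: j numeral_3_eq_3 numeral_2_eq_2)
  have "fib K' \<le> fib (j+2)" using KK j by (intro fib_mono) simp
  hence r2: "real (fib K') \<le> real (fib (j+2))" by (simp only: of_nat_le_iff)
  have r1: "real (fib K) = real (fib (j+2)) + real (fib (j+1))" using fK by (simp only: of_nat_add)
  have lo: "real (fib (j+1)) < real p ^ L" using d r1 r2 ppos by linarith
  have "real p ^ L' * 5 \<le> real p ^ L" using pp p5 ppos
  proof -
    have "real p ^ L' * 5 \<le> real p ^ L' * real p" using ppos p5 by (intro mult_left_mono) auto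
    thus ?thesis using pp by linarith
  qed
  moreover have "fib K' \<ge> 1" using K fib_neq_0_nat[of K'] by simp
  ultimately have hi: "0.8 * real p ^ L < real (fib K)" using d by simp
  have g0: "golden > 0" using gpos by simp
  have "golden ^ K = golden^3 * golden^j" using j by (simp add: power_add)
  also have "\<dots> \<le> golden^3 * (golden * fib (j+1))" using fib_lb[of j] g0 by (intro mult_left_mono) auto
  also have "\<dots> < golden^3 * (golden * real p ^ L)" using lo g0 by simp
  finally have A: "golden ^ K < golden^4 * real p ^ L" by (simp add: power_numeral_reduce)
  have fu: "real (fib (j+1+2)) \<le> golden^(j+1+1)" using fib_ub[of "j+1"] by blast
  have e3: "j+1+2 = K" "j+1+1 = j+2" using j by simp_all
  have fu': "real (fib K) \<le> golden^(j+2)" using fu unfolding e3 .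
  have "golden/1.25 * real p ^ L = golden * (0.8 * real p ^ L)" by simp
  also have "\<dots> < golden * fib K" using hi g0 by simp
  also have "\<dots> \<le> golden * golden ^ (j+2)" using fu' g0 by (intro mult_left_mono) auto
  also have "\<dots> = golden ^ K" using e3(1) by (simp add: power_Suc[symmetric] del: power_Suc)
  finally have B: "golden/1.25 * real p ^ L < golden ^ K" .
  have pr: "real p > 0" using p5 by simp
  have lK: "ln (golden ^ K) = real K * ln golden" using g0 by (simp add: ln_realpow)
  have lL: "ln (real p ^ L) = real L * ln (real p)" using pr by (simp add: ln_realpow)
  have "ln (golden ^ K) < ln (golden^4 * real p ^ L)" using A g0 pr by (subst ln_less_cancel_iff) auto
  hence 1: "real K * ln golden < 4 * ln golden + real L * ln (real p)"
    using g0 pr lK lL by (simp add: ln_mult ln_realpow)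
  have "ln (golden/1.25 * real p ^ L) < ln (golden ^ K)" using B g0 pr by (subst ln_less_cancel_iff) auto
  moreover have "ln (golden/1.25 * real p ^ L) = ln (golden/1.25) + ln (real p ^ L)"
    using g0 pr by (intro ln_mult_pos) (auto simp del: of_nat_power)
  ultimately have 2: "ln (golden/1.25) + real L * ln (real p) < real K * ln golden"
    using lK lL by linarith
  show ?thesis using 1 2 by linarith
qed

theorem lemma3p1:
  fixes p :: nat and c :: int and m :: nat and k l :: "nat \<Rightarrow> nat"
  assumes "prime p" and "p \<ge> 5"
    and sols: "{(kk, ll). kk \<ge> 2 \<and> c = int (fib kk) - int p ^ ll} = (\<lambda>i. (k i, l i)) ` {1..m}"
    and decr: "\<And>i. 1 \<le> i \<Longrightarrow> i < m \<Longrightarrow> l (Suc i) < l i"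
  shows "(\<forall>i\<in>{1..<m}.
           ln (golden / 1.25) < real (k i) * ln golden - real (l i) * ln (real p)
         \<and> real (k i) * ln golden - real (l i) * ln (real p) < 4 * ln golden)
         \<and> {ln (golden / 1.25)<..<4 * ln golden} \<subseteq> {0.25<..<2}"
proof (intro conjI ballI incl)
  fix i assume i: "i \<in> {1..<m}"
  have "(k i, l i) \<in> (\<lambda>i. (k i, l i)) ` {1..m}" using i by auto
  hence a: "k i \<ge> 2" "c = int (fib (k i)) - int p ^ l i" using sols by auto
  have "(k (Suc i), l (Suc i)) \<in> (\<lambda>i. (k i, l i)) ` {1..m}" using i by auto
  hence b: "k (Suc i) \<ge> 2" "c = int (fib (k (Suc i))) - int p ^ l (Suc i)" using sols by auto
  have "l (Suc i) < l i" using decr i by auto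
  from pair[OF assms(2) a(1) b(1) a(2) b(2) this]
  show "ln (golden / 1.25) < real (k i) * ln golden - real (l i) * ln (real p)"
       "real (k i) * ln golden - real (l i) * ln (real p) < 4 * ln golden" by auto
qed
end
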